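(* Let $a$ be a positive integer and let $L_{a,a} = \{C_{i,1} : 1 \le i \le a+1\} \cup \{C_{1,j} : 1 < j \le a+1\}$, of size $n = 2a+1$. Then on the $n \times n$ board, $\mathrm{cp}_{\mathrm{free}}(L_{a,a}) = 2$.
   Context: For integers $i,j$, $C_{i,j}$ denotes the unit square cell in column $i$ and row $j$ of the integer grid (columns numbered left to right, rows numbered top to bottom). A polyomino is a finite set of cells; its size is its number of cells. For a polyomino $\mathcal{P}$ of size $n$ the board is $\mathbb{B} = \{C_{i,j} : 1 \le i,j \le n\}$. The shift of $\mathcal{P}$ by integers $(c,d)$ is $\mathcal{P}+(c,d) = \{C_{x+c,y+d} : C_{x,y} \in \mathcal{P}\}$. For $0<a\le b$ and $L_{a,b} = \{C_{i,1} : 1 \le i \le a+1\} \cup \{C_{1,j} : 1 < j \le b+1\}$, the rotations by $90^\circ, 180^\circ, 270^\circ$ clockwise are $LR_{a,b} = \{C_{i,1} : 1 \le i \le b+1\} \cup \{C_{b+1,j} : 1 \le j \le a+1\}$, $LR^2_{a,b} = \{C_{i,b+1} : 1 \le i \le a+1\} \cup \{C_{a+1,j} : 1 \le j \le b+1\}$, $LR^3_{a,b} = \{C_{i,a+1} : 1 \le i \le b+1\} \cup \{C_{1,j} : 1 \le j \le a+1\}$ (reflections are not allowed). A free copy of $L_{a,b}$ is any shift of one of these four. A set of polyominoes is a valid arrangement if each is contained in $\mathbb{B}$ and they are pairwise disjoint. A free packing of $\mathcal{P}$ is a set of free copies of $\mathcal{P}$ forming a valid arrangement such that adding any further free copy of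 $\mathcal{P}$ yields an invalid arrangement. The clumsy free packing number $\mathrm{cp}_{\mathrm{free}}(\mathcal{P})$ is the minimum number of polyominoes in a free packing of $\mathcal{P}$ on the $n \times n$ board. *)

theory Defs
  imports Main
begin

text \<open>A cell C_{i,j} (column i, row j) is the pair (i, j) of integers; a polyomino is a set of cells.\<close>
type_synonym cell = "int \<times> int"

definition board :: "nat \<Rightarrow> cell set" where
  "board n = {(i, j). 1 \<le> i \<and> i \<le> int n \<and> 1 \<le> j \<and> j \<le> int n}"

definition shift :: "cell set \<Rightarrow> int \<Rightarrow> int \<Rightarrow> cell set" where
  "shift P c d = (\<lambda>(x, y). (x + c, y + d)) ` P"

definition Lshape :: "nat \<Rightarrow> nat \<Rightarrow> cell set" where
  "Lshape a b = {(i, 1) | i. 1 \<le> i \<and> i \<le> int a + 1} \<union> {(1, j) | j. 1 < j \<and> j \<le> int b + 1}"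

definition LR :: "nat \<Rightarrow> nat \<Rightarrow> cell set" where
  "LR a b = {(i, 1) | i. 1 \<le> i \<and> i \<le> int b + 1} \<union> {(int b + 1, j) | j. 1 \<le> j \<and> j \<le> int a + 1}"

definition LR2 :: "nat \<Rightarrow> nat \<Rightarrow> cell set" where
  "LR2 a b = {(i, int b + 1) | i. 1 \<le> i \<and> i \<le> int a + 1} \<union> {(int a + 1, j) | j. 1 \<le> j \<and> j \<le> int b + 1}"

definition LR3 :: "nat \<Rightarrow> nat \<Rightarrow> cell set" where
  "LR3 a b = {(i, int a + 1) | i. 1 \<le> i \<and> i \<le> int b + 1} \<union> {(1, j) | j. 1 \<le> j \<and> j \<le> int a + 1}"

text \<open>Free copies: shifts of the four rotations (no reflections).\<close>
definition free_copies :: "nat \<Rightarrow> nat \<Rightarrow> cell set set" where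
  "free_copies a b = {shift Q c d | Q c d. Q \<in> {Lshape a b, LR a b, LR2 a b, LR3 a b}}"

definition valid_arrangement :: "nat \<Rightarrow> cell set set \<Rightarrow> bool" where
  "valid_arrangement n S \<longleftrightarrow> (\<forall>P\<in>S. P \<subseteq> board n) \<and> pairwise disjnt S"

definition free_packing :: "nat \<Rightarrow> nat \<Rightarrow> cell set set \<Rightarrow> bool" where
  "free_packing a b S \<longleftrightarrow>
     S \<subseteq> free_copies a b \<and> valid_arrangement (card (Lshape a b)) S \<and>
     (\<forall>Q\<in>free_copies a b. Q \<notin> S \<longrightarrow> \<not> valid_arrangement (card (Lshape a b)) (insert Q S))"

definition cp_free_L :: "nat \<Rightarrow> nat \<Rightarrow> nat" where
  "cp_free_L a b = (LEAST k. \<exists>S. free_packing a b S \<and> card S = k)"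

end

theory Submission
  imports Defs
begin

lemma mem_shift: "((x::int),(y::int)) \<in> shift P c d \<longleftrightarrow> (x - c, y - d) \<in> P"
  unfolding shift_def
proof
  assume "(x - c, y - d) \<in> P"
  then show "(x, y) \<in> (\<lambda>(x, y). (x + c, y + d)) ` P" by (rule rev_image_eqI) simp
qed auto

lemma mem_L: "((x::int),(y::int)) \<in> Lshape a b \<longleftrightarrow> (y = 1 \<and> 1 \<le> x \<and> x \<le> int a + 1) \<or> (x = 1 \<and> 1 < y \<and> y \<le> int b + 1)"
  by (auto simp: Lshape_def)
lemma mem_LR: "((x::int),(y::int)) \<in> LR a b \<longleftrightarrow> (y = 1 \<and> 1 \<le> x \<and> x \<le> int b + 1) \<or> (x = int b + 1 \<and> 1 \<le> y \<and> y \<le> int a + 1)"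
  by (auto simp: LR_def)
lemma mem_LR2: "((x::int),(y::int)) \<in> LR2 a b \<longleftrightarrow> (y = int b + 1 \<and> 1 \<le> x \<and> x \<le> int a + 1) \<or> (x = int a + 1 \<and> 1 \<le> y \<and> y \<le> int b + 1)"
  by (auto simp: LR2_def)
lemma mem_LR3: "((x::int),(y::int)) \<in> LR3 a b \<longleftrightarrow> (y = int a + 1 \<and> 1 \<le> x \<and> x \<le> int b + 1) \<or> (x = 1 \<and> 1 \<le> y \<and> y \<le> int a + 1)"
  by (auto simp: LR3_def)
lemma mem_board: "((x::int),(y::int)) \<in> board n \<longleftrightarrow> 1 \<le> x \<and> x \<le> int n \<and> 1 \<le> y \<and> y \<le> int n"
  by (auto simp: board_def)

lemmas mems = mem_shift mem_L mem_LR mem_LR2 mem_LR3 mem_board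

lemma disjnt_pairI: "(\<And>x y. (x,y) \<in> A \<Longrightarrow> (x,y) \<in> B \<Longrightarrow> False) \<Longrightarrow> disjnt A B"
  by (auto simp: disjnt_def)

lemma subset_pairI: "(\<And>x y. (x,y) \<in> A \<Longrightarrow> (x,y) \<in> B) \<Longrightarrow> A \<subseteq> B"
  by auto

lemma card_L: "card (Lshape a a) = 2 * a + 1"
proof -
  have "Lshape a a = (\<lambda>i. (i, 1::int)) ` {1..int a + 1} \<union> (\<lambda>j. (1::int, j)) ` {2..int a + 1}"
    by (auto simp: Lshape_def)
  moreover have "card ((\<lambda>i. (i, 1::int)) ` {1..int a + 1}) = a + 1"
    by (subst card_image) (auto simp: inj_on_def)
  moreover have "card ((\<lambda>j. (1::int, j)) ` {2..int a + 1}) = a"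
    by (subst card_image) (auto simp: inj_on_def)
  moreover have "(\<lambda>i. (i, 1::int)) ` {1..int a + 1} \<inter> (\<lambda>j. (1::int, j)) ` {2..int a + 1} = {}"
    by auto
  ultimately show ?thesis by (simp add: card_Un_disjoint)
qed

definition rots :: "nat \<Rightarrow> cell set set" where
  "rots a = {Lshape a a, LR a a, LR2 a a, LR3 a a}"

lemma fc: "free_copies a a = {shift R c d | R c d. R \<in> rots a}"
  by (simp add: free_copies_def rots_def)

lemma in_box:
  assumes "R \<in> rots a" "(x, y) \<in> shift R c d"
  shows "c + 1 \<le> x \<and> x \<le> c + int a + 1 \<and> d + 1 \<le> y \<and> y \<le> d + int a + 1"
  using assms by (auto simp: rots_def mems)

lemma box_bounds:
  assumes "R \<in> rots a" "shift R c d \<subseteq> board (2 * a + 1)"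
  shows "0 \<le> c \<and> c \<le> int a \<and> 0 \<le> d \<and> d \<le> int a"
proof -
  have s: "\<And>x y. (x, y) \<in> shift R c d \<Longrightarrow> 1 \<le> x \<and> x \<le> 2 * int a + 1 \<and> 1 \<le> y \<and> y \<le> 2 * int a + 1"
  proof -
    fix x y assume "(x, y) \<in> shift R c d"
    then have "(x, y) \<in> board (2 * a + 1)" using assms(2) by blast
    then show "1 \<le> x \<and> x \<le> 2 * int a + 1 \<and> 1 \<le> y \<and> y \<le> 2 * int a + 1"
      unfolding mem_board by simp
  qed
  show ?thesis using assms(1)
  proof (auto simp: rots_def)
    assume "R = Lshape a a"
    then show "0 \<le> c" "c \<le> int a" "0 \<le> d" "d \<le> int a"
      using s[of "c+1" "d+1"] s[of "c + int a + 1" "d+1"] s[of "c+1" "d + int a + 1"]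
      by (auto simp: mems)
  next
    assume "R = LR a a"
    then show "0 \<le> c" "c \<le> int a" "0 \<le> d" "d \<le> int a"
      using s[of "c+1" "d+1"] s[of "c + int a + 1" "d+1"] s[of "c + int a + 1" "d + int a + 1"]
      by (auto simp: mems)
  next
    assume "R = LR2 a a"
    then show "0 \<le> c" "c \<le> int a" "0 \<le> d" "d \<le> int a"
      using s[of "c+1" "d + int a + 1"] s[of "c + int a + 1" "d+1"]
      by (auto simp: mems)
  next
    assume "R = LR3 a a"
    then show "0 \<le> c" "c \<le> int a" "0 \<le> d" "d \<le> int a"
      using s[of "c+1" "d+1"] s[of "c + int a + 1" "d + int a + 1"]
      by (auto simp: mems)
  qed
qed

lemma in_board:
  assumes "R \<in> rots a" "0 \<le> c" "c \<le> int a" "0 \<le> d" "d \<le> int a" "n = 2 * a + 1"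
  shows "shift R c d \<subseteq> board n"
  using assms by (auto simp: rots_def mems)

definition P1 :: "nat \<Rightarrow> cell set" where "P1 a = shift (LR3 a a) (int a) 0"
definition P2 :: "nat \<Rightarrow> cell set" where "P2 a = shift (LR3 a a) (int a - 1) (int a)"

lemma hit:
  assumes "0 < a" "R \<in> rots a" "0 \<le> c" "c \<le> int a" "0 \<le> d" "d \<le> int a"
  shows "\<exists>x y. (x, y) \<in> shift R c d \<and> ((x, y) \<in> P1 a \<or> (x, y) \<in> P2 a)"
  using assms(2)
proof (auto simp: rots_def)
  show "\<exists>x y. (x, y) \<in> shift (Lshape a a) c d \<and> ((x, y) \<in> P1 a \<or> (x, y) \<in> P2 a)"
    apply (rule exI[of _ "int a + 1"], rule exI[of _ "d + 1"])
    using assms by (auto simp: P1_def mems)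
  show "\<exists>x y. (x, y) \<in> shift (LR a a) c d \<and> ((x, y) \<in> P1 a \<or> (x, y) \<in> P2 a)"
    apply (rule exI[of _ "int a + 1"], rule exI[of _ "d + 1"])
    using assms by (auto simp: P1_def mems)
  show "\<exists>x y. (x, y) \<in> shift (LR2 a a) c d \<and> ((x, y) \<in> P1 a \<or> (x, y) \<in> P2 a)"
    apply (rule exI[of _ "c + int a + 1"], rule exI[of _ "int a + 1"])
    using assms by (auto simp: P1_def mems)
  show "\<exists>x y. (x, y) \<in> shift (LR3 a a) c d \<and> ((x, y) \<in> P1 a \<or> (x, y) \<in> P2 a)"
  proof (cases "d = 0 \<or> c = int a")
    case True
    then show ?thesis
      apply -
      apply (rule exI[of _ "int a + 1"], rule exI[of _ "int a + 1"])
      using assms by (auto simp: P1_def mems)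
  next
    case False
    then show ?thesis
      apply -
      apply (rule exI[of _ "int a"], rule exI[of _ "d + int a + 1"])
      using assms by (auto simp: P2_def mems)
  qed
qed


definition corners :: "nat \<Rightarrow> cell set set" where
  "corners a = {shift (Lshape a a) 0 0, shift (LR a a) (int a) 0, shift (LR2 a a) (int a) (int a), shift (LR3 a a) 0 (int a)}"

lemma corners_fc: "corners a \<subseteq> free_copies a a"
  unfolding corners_def fc rots_def by blast

lemma corners_board: "Q \<in> corners a \<Longrightarrow> Q \<subseteq> board (2 * a + 1)"
  unfolding corners_def
  apply (elim insertE emptyE; hypsubst; rule in_board)
  apply (auto simp: rots_def)
  done

lemma corners_ne: "Q \<in> corners a \<Longrightarrow> Q \<noteq> {}"
proof -
  have "(1, 1) \<in> shift (Lshape a a) 0 0" "(2 * int a + 1, 1) \<in> shift (LR a a) (int a) 0"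
    "(2 * int a + 1, 2 * int a + 1) \<in> shift (LR2 a a) (int a) (int a)"
    "(1, 2 * int a + 1) \<in> shift (LR3 a a) 0 (int a)" by (auto simp: mems)
  then show "Q \<in> corners a \<Longrightarrow> Q \<noteq> {}" unfolding corners_def by blast
qed

lemma avoid:
  assumes "0 < a" "R \<in> rots a" "0 \<le> c" "c \<le> int a" "0 \<le> d" "d \<le> int a"
  shows "\<exists>Q\<in>corners a. disjnt (shift R c d) Q"
proof -
  have b: "\<And>x y. (x, y) \<in> shift R c d \<Longrightarrow> c + 1 \<le> x \<and> x \<le> c + int a + 1 \<and> d + 1 \<le> y \<and> y \<le> d + int a + 1"
    using in_box[OF assms(2)] by blast
  consider "c < int a \<and> d < int a" | "1 \<le> c \<and> 1 \<le> d" | "c = int a \<and> d = 0" | "c = 0 \<and> d = int a"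
    using assms by linarith
  then show ?thesis
  proof cases
    case 1
    have "disjnt (shift R c d) (shift (LR2 a a) (int a) (int a))"
      by (rule disjnt_pairI, drule b) (use 1 assms(1) in \<open>auto simp: mems\<close>)
    then show ?thesis unfolding corners_def by blast
  next
    case 2
    have "disjnt (shift R c d) (shift (Lshape a a) 0 0)"
      by (rule disjnt_pairI, drule b) (use 2 assms(1) in \<open>auto simp: mems\<close>)
    then show ?thesis unfolding corners_def by blast
  next
    case 3
    have "disjnt (shift R c d) (shift (LR3 a a) 0 (int a))"
      by (rule disjnt_pairI, drule b) (use 3 assms(1) in \<open>auto simp: mems\<close>)
    then show ?thesis unfolding corners_def by blast
  next
    case 4
    have "disjnt (shift R c d) (shift (LR a a) (int a) 0)"
      by (rule disjnt_pairI, drule b) (use 4 assms(1) in \<open>auto simp: mems\<close>)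
    then show ?thesis unfolding corners_def by blast
  qed
qed

lemma packing_exists:
  assumes "0 < a"
  shows "free_packing a a {P1 a, P2 a} \<and> card {P1 a, P2 a} = 2"
proof -
  have n: "card (Lshape a a) = 2 * a + 1" by (rule card_L)
  have f1: "P1 a \<in> free_copies a a" "P2 a \<in> free_copies a a"
    unfolding fc rots_def P1_def P2_def by blast+
  have b1a: "P1 a \<subseteq> board (2 * a + 1)"
    unfolding P1_def by (rule in_board) (use assms in \<open>auto simp: rots_def\<close>)
  have b1b: "P2 a \<subseteq> board (2 * a + 1)"
    unfolding P2_def by (rule in_board) (use assms in \<open>auto simp: rots_def\<close>)
  note b1 = b1a b1b
  have d12: "disjnt (P1 a) (P2 a)"
    by (rule disjnt_pairI) (use assms in \<open>auto simp: P1_def P2_def mems\<close>)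
  have ne: "(int a + 1, int a + 1) \<in> P1 a" by (auto simp: P1_def mems)
  have neq: "P1 a \<noteq> P2 a" using d12 ne by (auto simp: disjnt_def)
  have valid: "valid_arrangement (2 * a + 1) {P1 a, P2 a}"
    unfolding valid_arrangement_def using b1 d12 by (auto simp: pairwise_insert disjnt_sym)
  have max: "\<not> valid_arrangement (2 * a + 1) (insert Q {P1 a, P2 a})"
    if QQ: "Q \<in> free_copies a a" "Q \<notin> {P1 a, P2 a}" for Q
  proof
    assume v: "valid_arrangement (2 * a + 1) (insert Q {P1 a, P2 a})"
    obtain R c d where Q: "Q = shift R c d" "R \<in> rots a" using QQ(1) unfolding fc by blast
    have "Q \<subseteq> board (2 * a + 1)" using v unfolding valid_arrangement_def by blast
    then have bd: "0 \<le> c \<and> c \<le> int a \<and> 0 \<le> d \<and> d \<le> int a" using box_bounds Q by blast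
    obtain x y where xy: "(x, y) \<in> Q" "(x, y) \<in> P1 a \<or> (x, y) \<in> P2 a"
      using hit[OF assms Q(2)] bd Q(1) by blast
    have "disjnt Q (P1 a)" "disjnt Q (P2 a)"
      using v QQ(2) unfolding valid_arrangement_def pairwise_def by auto
    then show False using xy by (auto simp: disjnt_def)
  qed
  show ?thesis unfolding free_packing_def n using f1 valid max neq by auto
qed

lemma packing_ge2:
  assumes "0 < a" "free_packing a a S"
  shows "2 \<le> card S"
proof (rule ccontr)
  assume "\<not> 2 \<le> card S"
  then have c: "card S = 0 \<or> card S = 1" by auto
  have n: "card (Lshape a a) = 2 * a + 1" by (rule card_L)
  have S: "S \<subseteq> free_copies a a" "valid_arrangement (2 * a + 1) S"
    "\<And>Q. Q \<in> free_copies a a \<Longrightarrow> Q \<notin> S \<Longrightarrow> \<not> valid_arrangement (2 * a + 1) (insert Q S)"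
    using assms(2) unfolding free_packing_def n by auto
  have "S \<subseteq> Pow (board (2 * a + 1))" using S(2) unfolding valid_arrangement_def by auto
  moreover have "finite (board (2 * a + 1))"
  proof -
    have "board (2 * a + 1) \<subseteq> {1..int (2 * a + 1)} \<times> {1..int (2 * a + 1)}"
      by (auto simp: board_def)
    then show ?thesis by (rule finite_subset) auto
  qed
  ultimately have fin: "finite S" by (meson finite_Pow_iff finite_subset)
  from c show False
  proof
    assume "card S = 0"
    then have "S = {}" using fin by simp
    let ?Q = "shift (Lshape a a) 0 0"
    have "?Q \<in> corners a" unfolding corners_def by blast
    then have "?Q \<in> free_copies a a" "?Q \<subseteq> board (2 * a + 1)"
      using corners_fc corners_board by blast+
    then show False using S(3)[of ?Q] \<open>S = {}\<close> by (auto simp: valid_arrangement_def)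
  next
    assume "card S = 1"
    then obtain P where P: "S = {P}" by (auto simp: card_Suc_eq)
    then obtain R c d where PR: "P = shift R c d" "R \<in> rots a" using S(1) unfolding fc by blast
    have "P \<subseteq> board (2 * a + 1)" using S(2) P unfolding valid_arrangement_def by blast
    then have bd: "0 \<le> c \<and> c \<le> int a \<and> 0 \<le> d \<and> d \<le> int a" using box_bounds PR by blast
    then obtain Q where Q: "Q \<in> corners a" "disjnt P Q" using avoid[OF assms(1) PR(2)] PR(1) by blast
    have Qf: "Q \<in> free_copies a a" "Q \<subseteq> board (2 * a + 1)" "Q \<noteq> {}"
      using Q(1) corners_fc corners_board corners_ne by blast+
    have "Q \<noteq> P" using Q(2) Qf(3) by (auto simp: disjnt_def)
    then have "Q \<notin> S" using P by simp
    moreover have "valid_arrangement (2 * a + 1) (insert Q S)"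
      unfolding valid_arrangement_def P using Qf \<open>P \<subseteq> board (2 * a + 1)\<close> Q(2)
      by (auto simp: pairwise_insert disjnt_sym)
    ultimately show False using S(3) Qf(1) by blast
  qed
qed

theorem theorem4:
  fixes a :: nat
  assumes "0 < a"
  shows "card (Lshape a a) = 2 * a + 1 \<and> cp_free_L a a = 2"
proof
  show "card (Lshape a a) = 2 * a + 1" by (rule card_L)
  show "cp_free_L a a = 2"
    unfolding cp_free_L_def
  proof (rule Least_equality)
    show "\<exists>S. free_packing a a S \<and> card S = 2" using packing_exists[OF assms] by blast
  next
    fix k assume "\<exists>S. free_packing a a S \<and> card S = k"
    then show "2 \<le> k" using packing_ge2[OF assms] by blast
  qed
qed

end
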